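(* Let $m,n\ge1$ be integers, $A=(a_{ij})$ an $n\times m$ real matrix and $q_{\max}>1$. Run the Iterated LLL-algorithm (ILLL) on $A$ and $q_{\max}$, producing for each integer $k$ with $1\le k\le k'$ a vector $q(k)=(q_1(k),\dots,q_m(k))\in\mathbb Z^m$. Then for every such $k$, $$\max_j|q_j(k)|\le 2^{\frac{(m+n-1)(m+n)}{4m}}\,2^{\frac{kn}{m}}\quad\text{and}\quad \max_i\|q_1(k)a_{i1}+\dots+q_m(k)a_{im}\|\le 2^{-k}.$$
   Context: $\|x\|$ denotes the distance from $x\in\mathbb R$ to the nearest integer. A basis $b_1,\dots,b_r$ of $\mathbb R^r$ with Gram–Schmidt vectors $b_i^*=b_i-\sum_{j<i}\mu_{ij}b_j^*$, $\mu_{ij}=(b_i,b_j^* )/(b_j^*,b_j^* )$, is reduced if $|\mu_{ij}|\le\frac12$ ($j<i$) and $|b_i^*+\mu_{i,i-1}b_{i-1}^*|^2\ge\frac34|b_{i-1}^*|^2$ ($1<i\le r$); the LLL-algorithm returns a reduced basis of the lattice generated by its input basis. The ILLL-algorithm: put $k'=\left\lceil -\frac{(m+n-1)(m+n)}{4n}+\frac{m\log_2 q_{\max}}{n}\right\rceil$ and, for $k\ge1$, $c(k)=\left(2^{-\frac{m+n+3}{4}-k+1}\right)^{\frac{m+n}{m}}$. Start with the basis given by the columns of $B=\begin{pmatrix} I_n & A\\ 0& c(1)I_m\end{pmatrix}$. In iteration $k=1,\dots,k'$: apply the LLL-algorithm to the current basis; from the first vector of the reduced basis, which has the form $(q_1a_{11}+\dots+q_ma_{1m}-p_1,\dots,q_1a_{n1}+\dots+q_ma_{nm}-p_n,c(k)q_1,\dots,c(k)q_m)^T$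 with $p_i,q_j\in\mathbb Z$, output $q(k)=(q_1,\dots,q_m)$; then divide the last $m$ coordinates of all basis vectors by $2^{\frac{m+n}{m}}$ (so the lattice in iteration $k$ is the one generated by the columns of $B$ with $c(1)$ replaced by $c(k)$). *)

theory Defs
  imports Complex_Main
begin

text \<open>Vectors of R^r are represented as functions nat => real, only indices < r matter.
  A basis b of R^r is a family b 0, ..., b (r-1) (0-based indexing).\<close>

definition ip :: "nat \<Rightarrow> (nat \<Rightarrow> real) \<Rightarrow> (nat \<Rightarrow> real) \<Rightarrow> real" where
  "ip r x y = (\<Sum>t<r. x t * y t)"

function gso :: "nat \<Rightarrow> (nat \<Rightarrow> nat \<Rightarrow> real) \<Rightarrow> nat \<Rightarrow> nat \<Rightarrow> real" where
  "gso r b i = (\<lambda>t. b i t - (\<Sum>j<i. (ip r (b i) (gso r b j) / ip r (gso r b j) (gso r b j)) * gso r b j t))"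
  by auto
termination by (relation "measure (\<lambda>(r, b, i). i)") auto

definition gs_mu :: "nat \<Rightarrow> (nat \<Rightarrow> nat \<Rightarrow> real) \<Rightarrow> nat \<Rightarrow> nat \<Rightarrow> real" where
  "gs_mu r b i j = ip r (b i) (gso r b j) / ip r (gso r b j) (gso r b j)"

definition lll_reduced :: "nat \<Rightarrow> (nat \<Rightarrow> nat \<Rightarrow> real) \<Rightarrow> bool" where
  "lll_reduced r b \<longleftrightarrow>
     (\<forall>i<r. \<forall>j<i. \<bar>gs_mu r b i j\<bar> \<le> 1/2) \<and>
     (\<forall>i. 1 \<le> i \<and> i < r \<longrightarrow>
        ip r (\<lambda>t. gso r b i t + gs_mu r b i (i-1) * gso r b (i-1) t)
             (\<lambda>t. gso r b i t + gs_mu r b i (i-1) * gso r b (i-1) t)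
        \<ge> 3/4 * ip r (gso r b (i-1)) (gso r b (i-1)))"

text \<open>The lattice vector B * (p;q)-type vector: coordinates i<n are
  q_1 a_{i1}+...+q_m a_{im} - p_i, coordinates n+j (j<m) are c q_j.\<close>
definition lvec :: "nat \<Rightarrow> nat \<Rightarrow> (nat \<Rightarrow> nat \<Rightarrow> real) \<Rightarrow> real \<Rightarrow> (nat \<Rightarrow> int) \<Rightarrow> (nat \<Rightarrow> int) \<Rightarrow> nat \<Rightarrow> real" where
  "lvec m n A c p q t =
     (if t < n then (\<Sum>j<m. of_int (q j) * A t j) - of_int (p t)
      else if t < n + m then c * of_int (q (t - n)) else 0)"

text \<open>b is a basis of the lattice generated by the columns of
  B = [[I_n, A],[0, c I_m]] (a basis of R^(m+n) generating that lattice).\<close>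
definition lattice_basis :: "nat \<Rightarrow> nat \<Rightarrow> (nat \<Rightarrow> nat \<Rightarrow> real) \<Rightarrow> real \<Rightarrow> (nat \<Rightarrow> nat \<Rightarrow> real) \<Rightarrow> bool" where
  "lattice_basis m n A c b \<longleftrightarrow>
     (\<forall>i<m+n. \<exists>p q. \<forall>t<m+n. b i t = lvec m n A c p q t) \<and>
     (\<forall>p q. \<exists>z::nat \<Rightarrow> int. \<forall>t<m+n. lvec m n A c p q t = (\<Sum>i<m+n. of_int (z i) * b i t)) \<and>
     (\<forall>x::nat \<Rightarrow> real. (\<forall>t<m+n. (\<Sum>i<m+n. x i * b i t) = 0) \<longrightarrow> (\<forall>i<m+n. x i = 0))"

definition ccoef :: "nat \<Rightarrow> nat \<Rightarrow> nat \<Rightarrow> real" where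
  "ccoef m n k = (2 powr (- (real (m+n) + 3) / 4 - real k + 1)) powr (real (m+n) / real m)"

definition kprime :: "nat \<Rightarrow> nat \<Rightarrow> real \<Rightarrow> int" where
  "kprime m n qmax = \<lceil>- (real (m+n) - 1) * real (m+n) / (4 * real n) + real m * log 2 qmax / real n\<rceil>"

definition dni :: "real \<Rightarrow> real" where
  "dni x = min (x - of_int \<lfloor>x\<rfloor>) (of_int \<lceil>x\<rceil> - x)"

end

theory Submission imports Defs "Jordan_Normal_Form.Determinant" begin
declare gso.simps[simp del]

lemma gso_eq: "gso r b i t = b i t - (\<Sum>j<i. gs_mu r b i j * gso r b j t)"
  by (subst gso.simps) (simp add: gs_mu_def)

lemma gso_0: "gso r b 0 t = b 0 t"
  by (subst gso_eq) simp

lemma ip_sym: "ip r x y = ip r y x"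
  by (simp add: ip_def mult.commute)

lemma ip_self_nonneg: "ip r x x \<ge> 0"
  by (simp add: ip_def sum_nonneg)

lemma ip_self_zero: assumes "ip r x x = 0" shows "ip r y x = 0"
proof -
  have "\<forall>t\<in>{..<r}. x t * x t = 0"
    using assms unfolding ip_def by (subst sum_nonneg_eq_0_iff[symmetric]) auto
  then show ?thesis by (simp add: ip_def)
qed

lemma ip_gso_expand:
  "ip r (gso r b i) z = ip r (b i) z - (\<Sum>j<i. gs_mu r b i j * ip r (gso r b j) z)"
proof -
  have "ip r (gso r b i) z = (\<Sum>t<r. b i t * z t - (\<Sum>j<i. gs_mu r b i j * gso r b j t) * z t)"
    unfolding ip_def by (simp add: gso_eq[of r b i] left_diff_distrib)
  also have "\<dots> = ip r (b i) z - (\<Sum>t<r. \<Sum>j<i. gs_mu r b i j * gso r b j t * z t)"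
    by (simp add: ip_def sum_subtractf sum_distrib_right)
  also have "(\<Sum>t<r. \<Sum>j<i. gs_mu r b i j * gso r b j t * z t) = (\<Sum>j<i. gs_mu r b i j * ip r (gso r b j) z)"
    by (subst sum.swap) (simp add: ip_def sum_distrib_left mult.assoc)
  finally show ?thesis .
qed

lemma gso_orth: "l < i \<Longrightarrow> ip r (gso r b i) (gso r b l) = 0"
proof (induction i arbitrary: l rule: less_induct)
  case (less i)
  have s: "(\<Sum>j<i. gs_mu r b i j * ip r (gso r b j) (gso r b l))
      = (\<Sum>j<i. if j = l then gs_mu r b i l * ip r (gso r b l) (gso r b l) else 0)"
  proof (rule sum.cong)
    fix j assume j: "j \<in> {..<i}"
    show "gs_mu r b i j * ip r (gso r b j) (gso r b l) = (if j = l then gs_mu r b i l * ip r (gso r b l) (gso r b l) else 0)"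
    proof (cases "j = l")
      case False
      then have "ip r (gso r b j) (gso r b l) = 0"
      proof (cases "j < l")
        case True then show ?thesis using less.IH[of l j] less.prems ip_sym by metis
      next
        case False then show ?thesis using less.IH[of j l] j \<open>j \<noteq> l\<close> by auto
      qed
      then show ?thesis using False by simp
    qed simp
  qed simp
  have "ip r (gso r b i) (gso r b l) = ip r (b i) (gso r b l) - gs_mu r b i l * ip r (gso r b l) (gso r b l)"
    using less.prems by (subst ip_gso_expand) (simp add: s)
  also have "\<dots> = 0"
  proof (cases "ip r (gso r b l) (gso r b l) = 0")
    case True then show ?thesis using ip_self_zero by simp
  next
    case False then show ?thesis by (simp add: gs_mu_def)
  qed
  finally show ?case .
qed


lemma mat_mult_mat: "mat r r f * mat r r g = mat r r (\<lambda>(i,j). \<Sum>k<r. f(i,k) * g(k,j))"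
  by (rule eq_matI) (auto simp: scalar_prod_def atLeast0LessThan)

lemma map_mat_mat: "map_mat h (mat r r f) = mat r r (\<lambda>x. h (f x))"
  by (rule eq_matI) auto

lemma prod_list_upt: "prod_list (map g [0..<r]) = (\<Prod>i<r. g i)"
  by (induct r) (auto simp: mult.commute)

lemma det_lower: assumes "\<And>i j. i < j \<Longrightarrow> j < r \<Longrightarrow> f(i,j) = 0"
  shows "det (mat r r f) = (\<Prod>i<r. f(i,i))"
proof -
  have "det (mat r r f) = prod_list (diag_mat (mat r r f))"
    by (rule det_lower_triangular[of r]) (auto simp: assms)
  also have "\<dots> = (\<Prod>i<r. f(i,i))"
    by (simp add: diag_mat_def prod_list_upt)
  finally show ?thesis .
qed

lemma prod_split: "(\<Prod>s<n+(m::nat). f s) = (\<Prod>s<n. f s) * (\<Prod>j<m. f (n+j))"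
  by (induct m) (auto simp: mult.assoc)

lemma sum_split: "(\<Sum>s<n+(m::nat). f s) = (\<Sum>s<n. f s) + (\<Sum>j<m. f (n+j))"
  by (induct m) (auto simp: add.assoc)

lemma sum_if_less: assumes "i \<le> (r::nat)"
  shows "(\<Sum>k<r. if k < i then f k else 0) = (\<Sum>k<i. f k)"
proof -
  have "{k\<in>{..<r}. k < i} = {..<i}" using assms by auto
  then show ?thesis using sum.inter_filter[of "{..<r}" f "\<lambda>k. k < i"] by simp
qed

lemma gram_det: "det (mat r r (\<lambda>(i,t). b i t)) ^ 2 = (\<Prod>i<r. ip r (gso r b i) (gso r b i))"
proof -
  define G where "G = mat r r (\<lambda>(i,t). gso r b i t)"
  define M where "M = mat r r (\<lambda>(i,j). if j < i then gs_mu r b i j else if i = j then 1 else (0::real))"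
  have bm: "mat r r (\<lambda>(i,t). b i t) = M * G"
    unfolding M_def G_def mat_mult_mat
  proof (rule eq_matI, simp_all)
    fix i t assume i: "i < r" and t: "t < r"
    have "(\<Sum>k<r. (if k < i then gs_mu r b i k else if i = k then 1 else 0) * gso r b k t)
        = (\<Sum>k<r. (if k < i then gs_mu r b i k * gso r b k t else 0) + (if k = i then gso r b i t else 0))"
      by (rule sum.cong) auto
    also have "\<dots> = (\<Sum>k<i. gs_mu r b i k * gso r b k t) + gso r b i t"
      using i by (simp add: sum.distrib sum_if_less)
    also have "(\<Sum>k<i. gs_mu r b i k * gso r b k t) + gso r b i t = b i t"
      by (subst (2) gso_eq) simp
    finally show "b i t = (\<Sum>k<r. (if k < i then gs_mu r b i k else if i = k then 1 else 0) * gso r b k t)" by simp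
  qed
  have dM: "det M = 1" unfolding M_def
    by (subst det_lower) auto
  have G: "G \<in> carrier_mat r r" "M \<in> carrier_mat r r" by (auto simp: G_def M_def)
  have d1: "det (mat r r (\<lambda>(i,t). b i t)) = det G"
    using bm det_mult[OF G(2) G(1)] dM by simp
  have tr: "transpose_mat G = mat r r (\<lambda>(t,i). gso r b i t)"
    unfolding G_def by (rule eq_matI) auto
  have GG: "G * transpose_mat G = mat r r (\<lambda>(i,j). ip r (gso r b i) (gso r b j))"
    unfolding tr unfolding G_def mat_mult_mat by (simp add: ip_def)
  have "det (G * transpose_mat G) = (\<Prod>i<r. ip r (gso r b i) (gso r b i))"
    unfolding GG by (subst det_lower) (auto intro: trans[OF ip_sym gso_orth])
  moreover have "det (G * transpose_mat G) = det G * det G"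
    using det_mult[OF G(1), of "transpose_mat G"] det_transpose[OF G(1)] G(1) by simp
  ultimately show ?thesis using d1 by (simp add: power2_eq_square)
qed


lemma ip_expand2: "ip r (\<lambda>t. x t + mu * y t) (\<lambda>t. x t + mu * y t)
   = ip r x x + 2 * mu * ip r x y + mu^2 * ip r y y"
  by (simp add: ip_def power2_eq_square algebra_simps sum.distrib sum_distrib_left)

lemma lovasz_step:
  assumes red: "lll_reduced r b" and i: "1 \<le> i" "i < r"
  shows "ip r (gso r b (i-1)) (gso r b (i-1)) \<le> 2 * ip r (gso r b i) (gso r b i)"
proof -
  let ?mu = "gs_mu r b i (i-1)"
  have mu: "\<bar>?mu\<bar> \<le> 1/2" using red i unfolding lll_reduced_def by auto
  have lov: "ip r (\<lambda>t. gso r b i t + ?mu * gso r b (i-1) t) (\<lambda>t. gso r b i t + ?mu * gso r b (i-1) t)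
        \<ge> 3/4 * ip r (gso r b (i-1)) (gso r b (i-1))" using red i unfolding lll_reduced_def by auto
  have o: "ip r (gso r b i) (gso r b (i-1)) = 0" using gso_orth i by simp
  have mu2: "?mu^2 \<le> 1/4"
  proof -
    have "?mu^2 = \<bar>?mu\<bar>^2" by simp
    also have "\<dots> \<le> (1/2)^2" by (rule power_mono[OF mu]) simp
    finally show ?thesis by (simp add: power2_eq_square)
  qed
  have nn: "ip r (gso r b (i-1)) (gso r b (i-1)) \<ge> 0" by (rule ip_self_nonneg)
  have "?mu^2 * ip r (gso r b (i-1)) (gso r b (i-1)) \<le> 1/4 * ip r (gso r b (i-1)) (gso r b (i-1))"
    by (rule mult_right_mono[OF mu2 nn])
  then show ?thesis using lov o unfolding ip_expand2 by simp
qed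

lemma first_le:
  assumes red: "lll_reduced r b" and i: "i < r"
  shows "ip r (b 0) (b 0) \<le> 2^i * ip r (gso r b i) (gso r b i)"
  using i
proof (induction i)
  case 0 then show ?case by (simp add: gso_0 ip_def)
next
  case (Suc i)
  have "ip r (b 0) (b 0) \<le> 2^i * ip r (gso r b i) (gso r b i)" using Suc by simp
  also have "\<dots> \<le> 2^i * (2 * ip r (gso r b (Suc i)) (gso r b (Suc i)))"
    using lovasz_step[OF red, of "Suc i"] Suc.prems by simp
  finally show ?case by simp
qed

lemma sum_upto_real: "(\<Sum>i<r. real i) = real r * (real r - 1) / 2"
  by (induct r) (auto simp: field_simps)

lemma lll_bound:
  assumes red: "lll_reduced r b"
  shows "ip r (b 0) (b 0) ^ r \<le> 2 powr (real r * (real r - 1) / 2) * (\<Prod>i<r. ip r (gso r b i) (gso r b i))"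
proof -
  have "ip r (b 0) (b 0) ^ r = (\<Prod>i<r. ip r (b 0) (b 0))" by simp
  also have "\<dots> \<le> (\<Prod>i<r. 2^i * ip r (gso r b i) (gso r b i))"
    by (rule prod_mono) (auto simp: ip_self_nonneg first_le[OF red])
  also have "\<dots> = (\<Prod>i<r. (2::real)^i) * (\<Prod>i<r. ip r (gso r b i) (gso r b i))"
    by (simp add: prod.distrib)
  also have "(\<Prod>i<r. (2::real)^i) = 2 ^ (\<Sum>i<r. i)" by (simp add: power_sum)
  also have "\<dots> = 2 powr (real r * (real r - 1) / 2)"
    by (simp add: powr_realpow[symmetric] sum_upto_real)
  finally show ?thesis .
qed


lemma sum_delta_mul: "(\<Sum>s<(n::nat). f s * (if t = s then 1 else (0::real))) = (if t < n then f t else 0)"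
  by (induct n) (auto simp: less_Suc_eq)

lemma sum_delta_mul2: "(\<Sum>j'<(m::nat). real_of_int (if j' = j then 1 else 0) * f j') = (if j < m then f j else 0)"
  by (induct m) (auto simp: less_Suc_eq)

lemma lattice_det:
  fixes m n :: nat and c :: real
  assumes lb: "lattice_basis m n A c b" and c: "c \<noteq> 0"
  shows "det (mat (m+n) (m+n) (\<lambda>(i,t). b i t)) ^ 2 = c ^ (2*m)"
proof -
  define r where "r = m+n"
  have "\<forall>i. \<exists>pq. i < r \<longrightarrow> (\<forall>t<r. b i t = lvec m n A c (fst pq) (snd pq) t)"
    using lb unfolding lattice_basis_def r_def by fastforce
  then obtain PQ where PQ: "\<And>i t. i < r \<Longrightarrow> t < r \<Longrightarrow> b i t = lvec m n A c (fst (PQ i)) (snd (PQ i)) t"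
    by metis
  define col where "col s t = (if s<n then (if t=s then 1 else 0) else if t<n then A t (s-n) else if t=s then c else 0)" for s t
  define coef where "coef p q s = (if s<n then - p s else q (s-n))" for p q :: "nat\<Rightarrow>int" and s
  have lv: "lvec m n A c p q t = (\<Sum>s<r. of_int (coef p q s) * col s t)" if t: "t<r" for p q t
  proof -
    have "(\<Sum>s<r. of_int (coef p q s) * col s t) = (\<Sum>s<n. of_int (-p s) * (if t = s then 1 else 0))
        + (\<Sum>j<m. of_int (q j) * (if t<n then A t j else if t = n+j then c else 0))"
      unfolding r_def add.commute[of m n] sum_split coef_def col_def
      apply simp apply (rule sum.cong) apply auto done
    also have "\<dots> = lvec m n A c p q t"
    proof (cases "t<n")
      case True then show ?thesis by (simp add: lvec_def sum_negf sum_delta_mul)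
    next
      case False
      then obtain j where j: "t = n + j" "j < m" using t unfolding r_def
        by (metis add.commute add_diff_inverse_nat add_less_imp_less_left)
      have "(\<Sum>j'<m. of_int (q j') * (if t<n then A t j' else if t = n+j' then c else 0))
          = (\<Sum>j'<m. if j' = j then of_int (q j) * c else 0)"
        by (rule sum.cong) (use j in auto)
      also have "\<dots> = of_int (q j) * c" using j by simp
      finally show ?thesis using False j by (simp add: lvec_def sum_negf sum_delta_mul)
    qed
    finally show ?thesis by simp
  qed
  have "\<forall>s. \<exists>z. s < r \<longrightarrow> (\<forall>t<r. col s t = (\<Sum>i<r. of_int (z i) * b i t))"
  proof
    fix s
    show "\<exists>z. s < r \<longrightarrow> (\<forall>t<r. col s t = (\<Sum>i<r. of_int (z i) * b i t))"
    proof (cases "s < r")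
      case True
      have "\<exists>p q. \<forall>t<r. col s t = lvec m n A c p q t"
      proof (cases "s < n")
        case True
        show ?thesis
          by (rule exI[of _ "\<lambda>i. if i = s then -1 else 0"], rule exI[of _ "\<lambda>j. 0"])
            (use True in \<open>auto simp: col_def lvec_def r_def\<close>)
      next
        case False
        show ?thesis
          by (rule exI[of _ "\<lambda>i. 0"], rule exI[of _ "\<lambda>j. if j = s - n then 1 else 0"])
            (use False \<open>s < r\<close> in \<open>auto simp: col_def lvec_def r_def sum_delta_mul2\<close>)
      qed
      then obtain p q where pq: "\<forall>t<r. col s t = lvec m n A c p q t" by blast
      obtain z where "\<forall>t<m+n. lvec m n A c p q t = (\<Sum>i<m+n. of_int (z i) * b i t)"
        using lb unfolding lattice_basis_def by blast
      then show ?thesis using pq unfolding r_def by auto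
    qed auto
  qed
  then obtain Z where Z: "\<And>s t. s < r \<Longrightarrow> t < r \<Longrightarrow> col s t = (\<Sum>i<r. of_int (Z s i) * b i t)"
    by metis
  define U :: "int mat" where "U = mat r r (\<lambda>(i,s). coef (fst (PQ i)) (snd (PQ i)) s)"
  define V :: "int mat" where "V = mat r r (\<lambda>(s,i). Z s i)"
  define B where "B = mat r r (\<lambda>(i,t). b i t)"
  define Bt where "Bt = mat r r (\<lambda>(s,t). col s t)"
  have h1: "B = map_mat of_int U * Bt"
    unfolding B_def U_def Bt_def map_mat_mat mat_mult_mat
    by (rule eq_matI) (auto simp: PQ lv)
  have h2: "Bt = map_mat of_int V * B"
    unfolding B_def V_def Bt_def map_mat_mat mat_mult_mat
    by (rule eq_matI) (auto simp: Z)
  have dBt: "det Bt = c ^ m"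
  proof -
    have "det Bt = (\<Prod>s<r. col s s)"
      unfolding Bt_def by (subst det_lower) (auto simp: col_def)
    also have "\<dots> = c ^ m"
      unfolding r_def add.commute[of m n] prod_split by (simp add: col_def)
    finally show ?thesis .
  qed
  have car: "B \<in> carrier_mat r r" "Bt \<in> carrier_mat r r" "map_mat (of_int :: int \<Rightarrow> real) U \<in> carrier_mat r r"
    "map_mat (of_int :: int \<Rightarrow> real) V \<in> carrier_mat r r"
    by (auto simp: B_def Bt_def U_def V_def)
  have d1: "det B = of_int (det U) * c ^ m"
    using h1 det_mult[OF car(3) car(2)] dBt by (simp add: of_int_hom.hom_det)
  have d2: "c ^ m = of_int (det V) * det B"
    using h2 det_mult[OF car(4) car(1)] dBt by (simp add: of_int_hom.hom_det)
  have e: "c ^ m = of_int (det V) * (of_int (det U) * c ^ m)" using d2 unfolding d1 .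
  have cm: "c ^ m \<noteq> 0" using c by simp
  have "(of_int (det V * det U) - 1) * c ^ m = 0" using e by (simp add: algebra_simps)
  then have "of_int (det V * det U) = (1::real)" using cm c by auto
  then have "det V * det U = 1" by (metis of_int_eq_1_iff)
  then have "det U = 1 \<or> det U = -1" by (auto simp: zmult_eq_1_iff)
  then have "det B ^ 2 = (c ^ m) ^ 2" using d1 by auto
  then show ?thesis unfolding B_def r_def by (simp add: power_mult[symmetric] mult.commute)
qed


lemma dni_le: "dni x \<le> \<bar>x - of_int p\<bar>"
proof (cases "p \<le> \<lfloor>x\<rfloor>")
  case True
  then have "x - of_int \<lfloor>x\<rfloor> \<le> \<bar>x - of_int p\<bar>"
    by (smt (verit) of_int_floor_le of_int_le_iff)
  then show ?thesis unfolding dni_def by linarith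
next
  case False
  then have "x \<le> of_int p" by (smt (verit) floor_less_iff of_int_less_iff not_le)
  then have "\<lceil>x\<rceil> \<le> p" by (simp add: ceiling_le_iff)
  then have "of_int \<lceil>x\<rceil> - x \<le> \<bar>x - of_int p\<bar>" using \<open>x \<le> of_int p\<close>
    by (smt (verit) of_int_le_iff)
  then show ?thesis unfolding dni_def by linarith
qed

lemma coord_le: assumes "t < r" shows "(x t)^2 \<le> ip r x x"
  unfolding ip_def power2_eq_square
  by (rule member_le_sum[where f = "\<lambda>t. x t * x t"]) (use assms in auto)

theorem lemma3:
  fixes m n k :: nat and A :: "nat \<Rightarrow> nat \<Rightarrow> real" and qmax :: real
    and b :: "nat \<Rightarrow> nat \<Rightarrow> real" and p q :: "nat \<Rightarrow> int"
  assumes "m \<ge> 1" and "n \<ge> 1" and "qmax > 1"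
    and "1 \<le> k" and "int k \<le> kprime m n qmax"
    and "lattice_basis m n A (ccoef m n k) b"
    and "lll_reduced (m+n) b"
    and "\<forall>t<m+n. b 0 t = lvec m n A (ccoef m n k) p q t"
  shows "(\<forall>j<m. real_of_int \<bar>q j\<bar> \<le>
            2 powr ((real (m+n) - 1) * real (m+n) / (4 * real m)) * 2 powr (real k * real n / real m))
       \<and> (\<forall>i<n. dni (\<Sum>j<m. of_int (q j) * A i j) \<le> 2 powr (- real k))"
proof -
  define r where "r = m + n"
  define c where "c = ccoef m n k"
  define x where "x = - (real r + 3) / 4 - real k + 1"
  define N where "N = ip r (b 0) (b 0)"
  have rpos: "r > 0" using assms(1) unfolding r_def by simp
  have c_eq: "c = 2 powr (x * real r / real m)"
    unfolding c_def ccoef_def x_def r_def by (simp add: powr_powr)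
  have cpos: "c > 0" unfolding c_eq by simp
  have cm: "c ^ m = 2 powr (x * real r)"
  proof -
    have "c ^ m = c powr real m" using cpos by (simp add: powr_realpow)
    also have "\<dots> = 2 powr (x * real r)" unfolding c_eq powr_powr using assms(1) by simp
    finally show ?thesis .
  qed
  have D: "(\<Prod>i<r. ip r (gso r b i) (gso r b i)) = 2 powr (2 * x * real r)"
  proof -
    have "(\<Prod>i<r. ip r (gso r b i) (gso r b i)) = det (mat r r (\<lambda>(i,t). b i t)) ^ 2"
      by (simp add: gram_det)
    also have "\<dots> = c ^ (2*m)" unfolding r_def c_def
      by (rule lattice_det[OF assms(6)]) (use cpos c_def in simp)
    also have "\<dots> = (c ^ m) ^ 2" by (simp add: power_mult[symmetric] mult.commute)
    also have "\<dots> = 2 powr (2 * x * real r)" unfolding cm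
      by (simp add: powr_realpow[symmetric] powr_powr mult_ac)
    finally show ?thesis .
  qed
  have "N ^ r \<le> 2 powr (real r * (real r - 1) / 2) * 2 powr (2 * x * real r)"
    using lll_bound[of r b] assms(7) D unfolding N_def r_def by simp
  also have "\<dots> = 2 powr (-2 * real k * real r)"
    unfolding powr_add[symmetric] x_def by (simp add: field_simps)
  also have "\<dots> = (2 powr (-2 * real k)) ^ r"
    by (simp add: powr_realpow[symmetric] powr_powr)
  finally have "N ^ r \<le> (2 powr (-2 * real k)) ^ r" .
  moreover have rs: "r = Suc (r - 1)" using rpos by simp
  ultimately have Nle: "N \<le> 2 powr (-2 * real k)"
    by (metis power_le_imp_le_base powr_ge_zero)
  have coord: "\<bar>b 0 t\<bar> \<le> 2 powr (- real k)" if t: "t < r" for t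
  proof -
    have "\<bar>b 0 t\<bar>^2 \<le> (2 powr (- real k))^2"
    proof -
      have "\<bar>b 0 t\<bar>^2 = (b 0 t)^2" by simp
      also have "\<dots> \<le> N" unfolding N_def by (rule coord_le[OF t])
      also have "\<dots> \<le> 2 powr (-2 * real k)" by (rule Nle)
      also have "\<dots> = (2 powr (- real k))^2"
        by (simp add: powr_realpow[symmetric] powr_powr mult_ac)
      finally show ?thesis .
    qed
    then show ?thesis by (rule power2_le_imp_le) simp
  qed
  have part1: "real_of_int \<bar>q j\<bar> \<le>
            2 powr ((real (m+n) - 1) * real (m+n) / (4 * real m)) * 2 powr (real k * real n / real m)"
    if j: "j < m" for j
  proof -
    have "b 0 (n+j) = c * of_int (q j)"
      using assms(8) j unfolding c_def by (simp add: lvec_def)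
    then have "c * real_of_int \<bar>q j\<bar> \<le> 2 powr (- real k)"
      using coord[of "n+j"] j cpos unfolding r_def by (simp add: abs_mult)
    then have "real_of_int \<bar>q j\<bar> \<le> 2 powr (- real k) / c"
      using cpos by (simp add: field_simps)
    also have "\<dots> = 2 powr (- real k - x * real r / real m)"
      unfolding c_eq by (simp add: powr_diff)
    also have "- real k - x * real r / real m = (real (m+n) - 1) * real (m+n) / (4 * real m) + real k * real n / real m"
      unfolding x_def r_def using assms(1) by (simp add: field_simps)
    finally show ?thesis by (simp add: powr_add)
  qed
  have part2: "dni (\<Sum>j<m. of_int (q j) * A i j) \<le> 2 powr (- real k)" if i: "i < n" for i
  proof -
    have "b 0 i = (\<Sum>j<m. of_int (q j) * A i j) - of_int (p i)"
      using assms(8) i by (simp add: lvec_def)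
    then show ?thesis using coord[of i] i dni_le[of "\<Sum>j<m. of_int (q j) * A i j" "p i"]
      unfolding r_def by simp
  qed
  show ?thesis using part1 part2 by blast
qed

end
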